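(* Let $\mathcal N$ be a feed-forward ReLU network with $d$ hidden layers. For all $\theta$ outside a Lebesgue-null subset of $\mathbb R^{\#\mathrm{params}}$: (i) for every neuron $z$ of the first hidden layer, $H_z(\theta)$ is an affine hyperplane in $\mathbb R^{n_{\mathrm{in}}}$; (ii) for every $2\le j\le d$, every neuron $z$ in layer $j$, and every activation region $\mathcal R$ of $\mathcal N_{j-1}$ at $\theta_{j-1}$, the set $H_z(\theta)\cap\mathcal R$ is either empty or equal to $P\cap\mathcal R$ for a single affine hyperplane $P\subset\mathbb R^{n_{\mathrm{in}}}$.
   Context: A feed-forward ReLU network $\mathcal N$ with input dimension $n_{\mathrm{in}}$ has hidden layers $1,\dots,d$; edges only between consecutive layers (arbitrary connectivity, no tied weights). A neuron $z$ in layer $1$ has pre-activation $z(x;\theta)=\sum_i w_{z,i}x_i$; a neuron $z$ in layer $\ell\ge2$ has pre-activation $z(x;\theta)=\sum_{z'}w_{z,z'}\max\{0,z'(x;\theta)-b_{z'}\}$ over neurons $z'$ of layer $\ell-1$ joined to $z$; $b_z$ is its bias. $\theta$ is the vector of all weights and biases. $H_z(\theta)=\{x:z(x;\theta)=b_z\}$. For $1\le j\le d$, $\mathcal N_j$ is the network consisting of the first $j$ hidden layers of $\mathcal N$ and $\theta_j$ the corresponding parameters. An activation region of $\mathcal N_{j}$ at $\theta_{j}$ is a non-empty set of the form $\{x:\ \mathrm{sgn}(z(x;\theta)-b_z)=a_z\text{ for every neuron }z\text{ in layers }1,\dots,j\}$ for some choice of signs $a_z\in\{-1,1\}$. *)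

theory Defs
  imports "HOL-Analysis.Analysis"
begin

text \<open>Architecture: hidden layers 1..d; layer l has neurons 0..<width l.
  Layer-1 neurons read all inputs (coordinates of type 'i).
  conn l k k' (l >= 2): neuron k of layer l is joined to neuron k' of layer l-1.
  Parameters: W1 k i (first-layer weight), W l k k' (weight of edge), B l k (bias).\<close>

datatype 'i param = W1 nat 'i | W nat nat nat | B nat nat

definition params :: "'i itself \<Rightarrow> nat \<Rightarrow> (nat \<Rightarrow> nat) \<Rightarrow> (nat \<Rightarrow> nat \<Rightarrow> nat \<Rightarrow> bool) \<Rightarrow> 'i param set" where
  "params _ d width conn =
     {W1 k i | k i. 1 \<le> d \<and> k < width 1}
   \<union> {W l k k' | l k k'. 2 \<le> l \<and> l \<le> d \<and> k < width l \<and> k' < width (l - 1) \<and> conn l k k'}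
   \<union> {B l k | l k. 1 \<le> l \<and> l \<le> d \<and> k < width l}"

fun preact :: "(nat \<Rightarrow> nat) \<Rightarrow> (nat \<Rightarrow> nat \<Rightarrow> nat \<Rightarrow> bool) \<Rightarrow> ('i::finite param \<Rightarrow> real)
    \<Rightarrow> nat \<Rightarrow> nat \<Rightarrow> real^'i \<Rightarrow> real" where
  "preact width conn \<theta> 0 k x = 0"
| "preact width conn \<theta> (Suc 0) k x = (\<Sum>i\<in>UNIV. \<theta> (W1 k i) * x $ i)"
| "preact width conn \<theta> (Suc (Suc l)) k x =
     (\<Sum>k'\<in>{k'. k' < width (Suc l) \<and> conn (Suc (Suc l)) k k'}.
        \<theta> (W (Suc (Suc l)) k k') * max 0 (preact width conn \<theta> (Suc l) k' x - \<theta> (B (Suc l) k')))"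

definition Hz :: "(nat \<Rightarrow> nat) \<Rightarrow> (nat \<Rightarrow> nat \<Rightarrow> nat \<Rightarrow> bool) \<Rightarrow> ('i::finite param \<Rightarrow> real)
    \<Rightarrow> nat \<Rightarrow> nat \<Rightarrow> (real^'i) set" where
  "Hz width conn \<theta> l k = {x. preact width conn \<theta> l k x = \<theta> (B l k)}"

definition act_region :: "(nat \<Rightarrow> nat) \<Rightarrow> (nat \<Rightarrow> nat \<Rightarrow> nat \<Rightarrow> bool) \<Rightarrow> ('i::finite param \<Rightarrow> real)
    \<Rightarrow> nat \<Rightarrow> (real^'i) set \<Rightarrow> bool" where
  "act_region width conn \<theta> j R \<longleftrightarrow> R \<noteq> {} \<and>
     (\<exists>a :: nat \<Rightarrow> nat \<Rightarrow> real. (\<forall>l k. a l k \<in> {-1, 1}) \<and>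
        R = {x. \<forall>l k. 1 \<le> l \<and> l \<le> j \<and> k < width l \<longrightarrow>
                 sgn (preact width conn \<theta> l k x - \<theta> (B l k)) = a l k})"

definition affine_hyperplane :: "(real^'i) set \<Rightarrow> bool" where
  "affine_hyperplane P \<longleftrightarrow> (\<exists>a b. a \<noteq> 0 \<and> P = {x. a \<bullet> x = b})"

end

theory Submission imports Defs begin

fun lin :: "(nat \<Rightarrow> nat) \<Rightarrow> (nat \<Rightarrow> nat \<Rightarrow> nat \<Rightarrow> bool) \<Rightarrow> ('i::finite param \<Rightarrow> real)
    \<Rightarrow> (nat \<times> nat) set \<Rightarrow> nat \<Rightarrow> nat \<Rightarrow> real^'i" where
  "lin width conn \<theta> S 0 k = 0"
| "lin width conn \<theta> S (Suc 0) k = (\<chi> i. \<theta> (W1 k i))"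
| "lin width conn \<theta> S (Suc (Suc l)) k =
     (\<Sum>k'\<in>{k'. k' < width (Suc l) \<and> conn (Suc (Suc l)) k k'}.
        \<theta> (W (Suc (Suc l)) k k') *\<^sub>R (if (Suc l, k') \<in> S then lin width conn \<theta> S (Suc l) k' else 0))"

fun cst :: "(nat \<Rightarrow> nat) \<Rightarrow> (nat \<Rightarrow> nat \<Rightarrow> nat \<Rightarrow> bool) \<Rightarrow> ('i::finite param \<Rightarrow> real)
    \<Rightarrow> (nat \<times> nat) set \<Rightarrow> nat \<Rightarrow> nat \<Rightarrow> real" where
  "cst width conn \<theta> S 0 k = 0"
| "cst width conn \<theta> S (Suc 0) k = 0"
| "cst width conn \<theta> S (Suc (Suc l)) k =
     (\<Sum>k'\<in>{k'. k' < width (Suc l) \<and> conn (Suc (Suc l)) k k'}.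
        \<theta> (W (Suc (Suc l)) k k') * (if (Suc l, k') \<in> S then cst width conn \<theta> S (Suc l) k' - \<theta> (B (Suc l) k') else 0))"

lemma affine_rep:
  shows "(\<And>l k. 1 \<le> l \<Longrightarrow> l < j \<Longrightarrow> k < width l \<Longrightarrow>
     ((l,k) \<in> S \<longrightarrow> preact width conn \<theta> l k x - \<theta> (B l k) \<ge> 0) \<and>
     ((l,k) \<notin> S \<longrightarrow> preact width conn \<theta> l k x - \<theta> (B l k) \<le> 0)) \<Longrightarrow> 1 \<le> l \<Longrightarrow> l \<le> j \<Longrightarrow> preact width conn \<theta> l k x = lin width conn \<theta> S l k \<bullet> x + cst width conn \<theta> S l k"
proof (induction width conn \<theta> S l k rule: lin.induct)
  case (2 width conn \<theta> S k)
  then show ?case by (simp add: inner_vec_def mult.commute)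
next
  case (3 width' conn' \<theta>' S' l k)
  let ?K = "{k'. k' < width' (Suc l) \<and> conn' (Suc (Suc l)) k k'}"
  have "preact width' conn' \<theta>' (Suc (Suc l)) k x =
     (\<Sum>k'\<in>?K. \<theta>' (W (Suc (Suc l)) k k') * ((if (Suc l, k') \<in> S' then lin width' conn' \<theta>' S' (Suc l) k' \<bullet> x else 0)
        + (if (Suc l, k') \<in> S' then cst width' conn' \<theta>' S' (Suc l) k' - \<theta>' (B (Suc l) k') else 0)))"
  unfolding preact.simps
  proof (rule sum.cong)
    fix k' assume k': "k' \<in> ?K"
    have IH: "(Suc l, k') \<in> S' \<Longrightarrow> preact width' conn' \<theta>' (Suc l) k' x = lin width' conn' \<theta>' S' (Suc l) k' \<bullet> x + cst width' conn' \<theta>' S' (Suc l) k'"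
      by (rule "3.IH") (use k' "3.prems" in auto)
    have "(Suc l, k') \<in> S' \<longrightarrow> preact width' conn' \<theta>' (Suc l) k' x - \<theta>' (B (Suc l) k') \<ge> 0"
      "(Suc l, k') \<notin> S' \<longrightarrow> preact width' conn' \<theta>' (Suc l) k' x - \<theta>' (B (Suc l) k') \<le> 0"
      using "3.prems"(1)[of "Suc l" k'] "3.prems" k' by auto
    note sg = this
    show "\<theta>' (W (Suc (Suc l)) k k') * max 0 (preact width' conn' \<theta>' (Suc l) k' x - \<theta>' (B (Suc l) k')) =
     \<theta>' (W (Suc (Suc l)) k k') * ((if (Suc l, k') \<in> S' then lin width' conn' \<theta>' S' (Suc l) k' \<bullet> x else 0)
        + (if (Suc l, k') \<in> S' then cst width' conn' \<theta>' S' (Suc l) k' - \<theta>' (B (Suc l) k') else 0))"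
      using IH sg by (auto simp: max_def)
  qed simp
  also have "\<dots> = lin width' conn' \<theta>' S' (Suc (Suc l)) k \<bullet> x + cst width' conn' \<theta>' S' (Suc (Suc l)) k"
    unfolding lin.simps cst.simps inner_sum_left sum.distrib[symmetric]
    by (rule sum.cong) (auto simp: distrib_left)
  finally show ?case .
qed simp

lemma comp_meas: "(\<lambda>\<theta>. \<theta> p) \<in> borel_measurable (Pi\<^sub>M I (\<lambda>_. lborel :: real measure))"
proof (cases "p \<in> I")
  case True then show ?thesis by (rule measurable_component_singleton[where M="\<lambda>_. lborel", simplified])
next
  case False
  have "(\<lambda>\<theta>::'a \<Rightarrow> real. undefined :: real) \<in> borel_measurable (Pi\<^sub>M I (\<lambda>_. lborel))" by simp
  then show ?thesis
    by (rule measurable_cong[THEN iffD1, rotated]) (use False in \<open>auto simp: space_PiM PiE_def extensional_def\<close>)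
qed

lemma cst_meas: "(\<lambda>\<theta>. cst width conn \<theta> S l k) \<in> borel_measurable (Pi\<^sub>M I (\<lambda>_. lborel))"
proof (induction l arbitrary: k rule: nat_less_induct)
  case (1 n)
  show ?case
  proof (cases n)
    case 0 then show ?thesis by simp
  next
    case (Suc m) note m = this
    show ?thesis
    proof (cases m)
      case 0 then show ?thesis using m by simp
    next
      case (Suc l)
      have IH: "(\<lambda>\<theta>. cst width conn \<theta> S (Suc l) k') \<in> borel_measurable (Pi\<^sub>M I (\<lambda>_. lborel))" for k'
        using 1 m Suc by auto
      show ?thesis unfolding m Suc cst.simps
        apply (intro borel_measurable_sum borel_measurable_times comp_meas)
        subgoal for k' by (cases "(Suc l, k') \<in> S") (auto intro!: borel_measurable_diff IH comp_meas)
        done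
    qed
  qed
qed

lemma cst_indep: "l \<le> m \<Longrightarrow> cst width conn (\<theta>(B m k0 := y)) S l k = cst width conn \<theta> S l k"
proof (induction l arbitrary: k rule: nat_less_induct)
  case (1 n)
  show ?case
  proof (cases n)
    case 0 then show ?thesis by simp
  next
    case (Suc m') note m = this
    show ?thesis
    proof (cases m')
      case 0 then show ?thesis using m by simp
    next
      case (Suc l)
      have IH: "cst width conn (\<theta>(B m k0 := y)) S (Suc l) k' = cst width conn \<theta> S (Suc l) k'" for k'
      proof -
        have "Suc l < n" "Suc l \<le> m" using 1(2) m Suc by auto
        then show ?thesis using 1(1) by blast
      qed
      show ?thesis unfolding m Suc cst.simps IH
        using 1(2) m Suc by (intro sum.cong) auto
    qed
  qed
qed

lemma null_graph:
  fixes c :: "('a \<Rightarrow> real) \<Rightarrow> real"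
  assumes I: "finite I" "p \<in> I" and cm: "c \<in> borel_measurable (Pi\<^sub>M I (\<lambda>_. lborel))"
    and ind: "\<And>\<theta> y. c (\<theta>(p := y)) = c \<theta>"
  shows "{\<theta> \<in> space (Pi\<^sub>M I (\<lambda>_. lborel)). \<theta> p = c \<theta>} \<in> null_sets (Pi\<^sub>M I (\<lambda>_. lborel))"
proof -
  let ?M = "Pi\<^sub>M I (\<lambda>_. lborel :: real measure)"
  let ?A = "{\<theta> \<in> space ?M. \<theta> p = c \<theta>}"
  interpret product_sigma_finite "\<lambda>_. lborel :: real measure" by standard
  have Am: "?A \<in> sets ?M"
    using comp_meas[of p I] cm by measurable
  have Ieq: "I = insert p (I - {p})" using I by auto
  have "emeasure ?M ?A = (\<integral>\<^sup>+ \<theta>. indicator ?A \<theta> \<partial>?M)"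
    using Am by simp
  also have "\<dots> = (\<integral>\<^sup>+ x. (\<integral>\<^sup>+ y. indicator ?A (x(p := y)) \<partial>lborel) \<partial>(Pi\<^sub>M (I - {p}) (\<lambda>_. lborel)))"
    using product_nn_integral_insert[of "I - {p}" p "indicator ?A"] Am I Ieq by simp
  also have "\<dots> \<le> (\<integral>\<^sup>+ x. (\<integral>\<^sup>+ y. indicator {c x} y \<partial>lborel) \<partial>(Pi\<^sub>M (I - {p}) (\<lambda>_. lborel)))"
    by (intro nn_integral_mono) (auto simp: indicator_def ind)
  also have "\<dots> = 0" by simp
  finally show ?thesis using Am by (simp add: null_sets_def)
qed

lemma params_finite: "finite (params TYPE('i::finite) d width conn)"
proof -
  have "params TYPE('i) d width conn \<subseteq>
      (\<lambda>(k,i). W1 k i) ` ({..<width 1} \<times> UNIV)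
    \<union> (\<lambda>(l,k,k'). W l k k') ` (Sigma {..d} (\<lambda>l. {..<width l} \<times> {..<width (l-1)}))
    \<union> (\<lambda>(l,k). B l k) ` (Sigma {..d} (\<lambda>l. {..<width l}))"
    unfolding params_def by (auto simp: image_iff)
  moreover have "finite (Sigma {..d} (\<lambda>l. {..<width l} \<times> {..<width (l-1)}))" by (intro finite_SigmaI) auto
  moreover have "finite (Sigma {..d} (\<lambda>l. {..<width l}))" by (intro finite_SigmaI) auto
  moreover have "finite ({..<width 1} \<times> (UNIV :: 'i set))" by simp
  ultimately show ?thesis by (meson finite_Un finite_imageI finite_subset)
qed

theorem lemma4:
  fixes d :: nat and width :: "nat \<Rightarrow> nat" and conn :: "nat \<Rightarrow> nat \<Rightarrow> nat \<Rightarrow> bool"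
  shows "\<exists>N \<in> null_sets (Pi\<^sub>M (params TYPE('i::finite) d width conn) (\<lambda>_. lborel)).
    \<forall>\<theta> \<in> space (Pi\<^sub>M (params TYPE('i) d width conn) (\<lambda>_. lborel)) - N.
      (1 \<le> d \<longrightarrow> (\<forall>k < width 1. affine_hyperplane (Hz width conn \<theta> 1 k)))
    \<and> (\<forall>j. 2 \<le> j \<and> j \<le> d \<longrightarrow> (\<forall>k < width j. \<forall>R.
         act_region width conn \<theta> (j - 1) R \<longrightarrow>
           Hz width conn \<theta> j k \<inter> R = {} \<or>
           (\<exists>P. affine_hyperplane P \<and> Hz width conn \<theta> j k \<inter> R = P \<inter> R)))"
proof -
  let ?I = "params TYPE('i) d width conn"
  let ?M = "Pi\<^sub>M ?I (\<lambda>_. lborel :: real measure)"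
  define i0 :: 'i where "i0 = undefined"
  define N1 where "N1 = (\<Union>k \<in> {k. 1 \<le> d \<and> k < width 1}. {\<theta> \<in> space ?M. \<theta> (W1 k i0) = (\<lambda>_. 0) \<theta>})"
  define N2 where "N2 = (\<Union>j \<in> {2..d}. \<Union>k \<in> {..<width j}. \<Union>S \<in> Pow (Sigma {..<j} (\<lambda>l. {..<width l})).
      {\<theta> \<in> space ?M. \<theta> (B j k) = cst width conn \<theta> S j k})"
  have fin: "finite ?I" by (rule params_finite)
  have "N1 \<in> null_sets ?M"
    unfolding N1_def
  proof (intro null_sets_UN')
    fix k assume k: "k \<in> {k. 1 \<le> d \<and> k < width 1}"
    show "{\<theta> \<in> space ?M. \<theta> (W1 k i0) = (\<lambda>_. 0) \<theta>} \<in> null_sets ?M"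
      by (rule null_graph[OF fin]) (use k in \<open>auto simp: params_def\<close>)
  qed auto
  moreover have "N2 \<in> null_sets ?M"
    unfolding N2_def
  proof (intro null_sets_UN' ballI)
    fix j k S assume j: "j \<in> {2..d}" and k: "k \<in> {..<width j}"
    show "{\<theta> \<in> space ?M. \<theta> (B j k) = cst width conn \<theta> S j k} \<in> null_sets ?M"
    proof (rule null_graph[OF fin])
      show "B j k \<in> ?I" using j k by (auto simp: params_def)
    qed (auto intro: cst_meas cst_indep)
  qed (auto intro: countable_finite finite_SigmaI)
  ultimately have Nnull: "N1 \<union> N2 \<in> null_sets ?M" by auto
  show ?thesis
  proof (intro bexI[OF _ Nnull] ballI conjI impI allI)
    fix \<theta> assume th: "\<theta> \<in> space ?M - (N1 \<union> N2)"
    {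
      fix k assume d: "1 \<le> d" and k: "k < width 1"
      have nz: "\<theta> (W1 k i0) \<noteq> 0" using th d k unfolding N1_def by auto
      show "affine_hyperplane (Hz width conn \<theta> 1 k)"
        unfolding affine_hyperplane_def Hz_def
      proof (intro exI conjI)
        show "(\<chi> i. \<theta> (W1 k i)) \<noteq> 0" using nz by (metis vec_lambda_beta zero_index)
        show "{x. preact width conn \<theta> 1 k x = \<theta> (B 1 k)} = {x. (\<chi> i. \<theta> (W1 k i)) \<bullet> x = \<theta> (B 1 k)}"
          by (simp add: inner_vec_def mult.commute)
      qed
    }
    fix j k R
    assume j: "2 \<le> j \<and> j \<le> d" and k: "k < width j" and R: "act_region width conn \<theta> (j - 1) R"
    obtain a where a: "\<forall>l k. a l k \<in> {-1, 1}" and Req: "R = {x. \<forall>l k. 1 \<le> l \<and> l \<le> j - 1 \<and> k < width l \<longrightarrow>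
                 sgn (preact width conn \<theta> l k x - \<theta> (B l k)) = a l k}"
      using R unfolding act_region_def by blast
    define S where "S = {(l,k). l < j \<and> k < width l \<and> a l k = 1}"
    have rep: "preact width conn \<theta> j k x = lin width conn \<theta> S j k \<bullet> x + cst width conn \<theta> S j k" if x: "x \<in> R" for x
    proof (rule affine_rep[where j=j])
      fix l k' assume l: "1 \<le> l" "l < j" "k' < width l"
      have sg: "sgn (preact width conn \<theta> l k' x - \<theta> (B l k')) = a l k'"
        using x l unfolding Req by auto
      show "((l, k') \<in> S \<longrightarrow> 0 \<le> preact width conn \<theta> l k' x - \<theta> (B l k')) \<and>
        ((l, k') \<notin> S \<longrightarrow> preact width conn \<theta> l k' x - \<theta> (B l k') \<le> 0)"
      proof (cases "a l k' = 1")
        case True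
        then show ?thesis using sg l unfolding S_def by (auto simp: sgn_if split: if_splits)
      next
        case False
        then have "a l k' = -1" using a by auto
        then show ?thesis using sg l False unfolding S_def by (auto simp: sgn_if split: if_splits)
      qed
    qed (use j in auto)
    show "Hz width conn \<theta> j k \<inter> R = {} \<or>
           (\<exists>P. affine_hyperplane P \<and> Hz width conn \<theta> j k \<inter> R = P \<inter> R)"
    proof (cases "lin width conn \<theta> S j k = 0")
      case False
      let ?P = "{x. lin width conn \<theta> S j k \<bullet> x = \<theta> (B j k) - cst width conn \<theta> S j k}"
      have "affine_hyperplane ?P" unfolding affine_hyperplane_def using False by blast
      moreover have "Hz width conn \<theta> j k \<inter> R = ?P \<inter> R"
        unfolding Hz_def using rep by force
      ultimately show ?thesis by blast
    next
      case True
      show ?thesis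
      proof (rule ccontr)
        assume "\<not> ?thesis"
        then obtain x where x: "x \<in> R" "preact width conn \<theta> j k x = \<theta> (B j k)"
          unfolding Hz_def by auto
        have eq: "\<theta> (B j k) = cst width conn \<theta> S j k" using rep[OF x(1)] x(2) True by simp
        have "S \<in> Pow (Sigma {..<j} (\<lambda>l. {..<width l}))" unfolding S_def by auto
        then have "\<theta> \<in> N2" unfolding N2_def using th j k eq by (intro UN_I[of j] UN_I[of k] UN_I[of S]) auto
        then show False using th by auto
      qed
    qed
  qed
qed

end
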